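(* Let $U=(u_{ij})\in\mathcal{U}_d(\mathbb{C})$ and let $R_U=(r_{ij})$ be a real matrix with non-negative entries such that $r_{ij}=0$ iff $u_{ij}=0$ and $r_{ij}>0$ otherwise. Then there exist $D_1,D_2\in\mathcal{DU}_d(\mathbb{C})$ such that for all $k,l\in\{1,\dots,d\}$, $$(R_U^TR_U)_{kl}=0\iff (D_1U^\dagger D_2U)_{kl}=0.$$
   Context: $\mathcal{U}_d(\mathbb{C})$ denotes the group of $d\times d$ unitary matrices and $\mathcal{DU}_d(\mathbb{C})$ its subgroup of diagonal unitary matrices. *)

theory Defs
  imports "HOL-Analysis.Analysis"
begin

definition adjoint_mat :: "complex^'n^'n \<Rightarrow> complex^'n^'n" where
  "adjoint_mat U = (\<chi> i j. cnj (U $ j $ i))"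

text \<open>The unitary group U_d(C), d = CARD('n).\<close>
definition unitary_mat :: "complex^'n^'n \<Rightarrow> bool" where
  "unitary_mat U \<longleftrightarrow> adjoint_mat U ** U = mat 1 \<and> U ** adjoint_mat U = mat 1"

definition diag_unitary_mat :: "complex^'n^'n \<Rightarrow> bool" where
  "diag_unitary_mat D \<longleftrightarrow> unitary_mat D \<and> (\<forall>i j. i \<noteq> j \<longrightarrow> D $ i $ j = 0)"

end

theory Submission
  imports Defs "HOL-Computational_Algebra.Polynomial"
begin

lemma cis_inj: "inj_on cis {0..1::real}"
proof
  fix a b :: real assume a: "a \<in> {0..1}" and b: "b \<in> {0..1}" and e: "cis a = cis b"
  then have "exp (\<i> * of_real a) = exp (\<i> * of_real b)" by (simp add: cis_conv_exp)
  then obtain n :: int where n: "\<i> * of_real a = \<i> * of_real b + complex_of_real (real_of_int (2 * n) * pi) * \<i>"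
    unfolding exp_eq by blast
  then have "Im (\<i> * of_real a) = Im (\<i> * of_real b + complex_of_real (real_of_int (2 * n) * pi) * \<i>)" by simp
  then have ab: "a = b + 2*n*pi" by simp
  show "a = b"
  proof (cases "n = 0")
    case True then show ?thesis using ab by simp
  next
    case False
    then have "\<bar>real_of_int n\<bar> \<ge> 1" by linarith
    then have "\<bar>2*n*pi\<bar> \<ge> 2*pi" using pi_gt3 by (simp add: abs_mult)
    then show ?thesis using ab a b pi_gt3 by auto
  qed
qed

lemma inf_circ: "infinite {z::complex. norm z = 1}"
proof
  assume f: "finite {z::complex. norm z = 1}"
  have "cis ` {0..1} \<subseteq> {z::complex. norm z = 1}" by auto
  then have "finite (cis ` {0..1::real})" using f finite_subset by blast
  then have "finite {0..1::real}" using cis_inj finite_image_iff by blast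
  then show False using infinite_Icc[of "0::real" 1] by simp
qed

lemma diag_unitary:
  fixes d :: "'n::finite \<Rightarrow> complex"
  assumes "\<forall>i. norm (d i) = 1"
  shows "diag_unitary_mat ((\<chi> i j. if i = j then d i else 0) :: complex^'n^'n)"
proof -
  have c: "cnj (d i) * d i = 1" for i
    using assms complex_norm_square[of "d i"] by (simp add: mult.commute)
  have c2: "d i * cnj (d i) = 1" for i using c[of i] by (simp add: mult.commute)
  show ?thesis
    unfolding diag_unitary_mat_def unitary_mat_def
    by (auto simp: adjoint_mat_def matrix_matrix_mult_def mat_def vec_eq_iff c c2
             if_distrib[where f="\<lambda>x. x * _"] if_distrib[where f="\<lambda>x. _ * x"] cong: if_cong)
qed

theorem corollary23:
  fixes U :: "complex^'n^'n" and R :: "real^'n^'n"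
  assumes "unitary_mat U"
    and "\<forall>i j. R $ i $ j \<ge> 0"
    and "\<forall>i j. R $ i $ j = 0 \<longleftrightarrow> U $ i $ j = 0"
    and "\<forall>i j. U $ i $ j \<noteq> 0 \<longrightarrow> R $ i $ j > 0"
  shows "\<exists>D1 D2. diag_unitary_mat D1 \<and> diag_unitary_mat D2 \<and>
           (\<forall>k l. (transpose R ** R) $ k $ l = 0 \<longleftrightarrow>
                  (D1 ** adjoint_mat U ** D2 ** U) $ k $ l = 0)"
proof -
  obtain e :: "'n \<Rightarrow> nat" and n where einj: "inj_on e UNIV"
    using finite_imp_inj_to_nat_seg[of "UNIV::'n set"] by auto
  define c where "c k l i = cnj (U$i$k) * U$i$l" for k l i
  define p where "p k l = (\<Sum>i\<in>UNIV. monom (c k l i) (e i))" for k l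
  define S where "S = {(k,l). \<exists>i. U$i$k \<noteq> 0 \<and> U$i$l \<noteq> 0}"
  have pnz: "p k l \<noteq> 0" if "(k,l) \<in> S" for k l
  proof -
    from that obtain j where j: "U$j$k \<noteq> 0" "U$j$l \<noteq> 0" unfolding S_def by auto
    have "coeff (p k l) (e j) = (\<Sum>i\<in>UNIV. if i = j then c k l i else 0)"
      unfolding p_def coeff_sum coeff_monom
      by (rule sum.cong) (use einj in \<open>auto simp: inj_on_def\<close>)
    also have "\<dots> = c k l j" by simp
    also have "\<dots> \<noteq> 0" using j by (simp add: c_def)
    finally show ?thesis by auto
  qed
  define P where "P = (\<Prod>kl\<in>S. p (fst kl) (snd kl))"
  have "P \<noteq> 0" unfolding P_def
    using pnz by (subst prod_zero_iff) auto
  then have "finite {z. poly P z = 0}" by (rule poly_roots_finite)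
  then have "\<not> {z::complex. norm z = 1} \<subseteq> {z. poly P z = 0}"
    using inf_circ finite_subset by blast
  then obtain w where w1: "norm w = 1" and wP: "poly P w \<noteq> 0" by auto
  have wp: "poly (p k l) w \<noteq> 0" if "(k,l) \<in> S" for k l
    using wP that unfolding P_def poly_prod by (subst (asm) prod_zero_iff) auto
  define d where "d i = w ^ e i" for i
  have dn: "\<forall>i. norm (d i) = 1" using w1 by (simp add: d_def norm_power)
  define D2 :: "complex^'n^'n" where "D2 = (\<chi> i j. if i = j then d i else 0)"
  have ent: "(mat 1 ** adjoint_mat U ** D2 ** U) $ k $ l = (\<Sum>i\<in>UNIV. cnj (U$i$k) * d i * U$i$l)" for k l
    unfolding matrix_mul_lid by (simp add: D2_def adjoint_mat_def matrix_matrix_mult_def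
             if_distrib[where f="\<lambda>x. _ * x"] cong: if_cong)
  have polyeq: "poly (p k l) w = (\<Sum>i\<in>UNIV. cnj (U$i$k) * d i * U$i$l)" for k l
    unfolding p_def poly_sum poly_monom c_def d_def by (simp add: algebra_simps)
  have Req: "(transpose R ** R) $ k $ l = 0 \<longleftrightarrow> (k,l) \<notin> S" for k l
  proof -
    have "(transpose R ** R) $ k $ l = (\<Sum>i\<in>UNIV. R$i$k * R$i$l)"
      by (simp add: matrix_matrix_mult_def transpose_def)
    also have "\<dots> = 0 \<longleftrightarrow> (\<forall>i. R$i$k * R$i$l = 0)"
      using assms(2) by (subst sum_nonneg_eq_0_iff) auto
    also have "\<dots> \<longleftrightarrow> (k,l) \<notin> S" using assms(3) by (auto simp: S_def)
    finally show ?thesis .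
  qed
  have "(transpose R ** R) $ k $ l = 0 \<longleftrightarrow> (mat 1 ** adjoint_mat U ** D2 ** U) $ k $ l = 0" for k l
  proof (cases "(k,l) \<in> S")
    case True
    then show ?thesis using Req wp[OF True] polyeq ent by metis
  next
    case False
    then have z0: "\<forall>i. cnj (U$i$k) * d i * U$i$l = 0" by (auto simp: S_def)
    then have "(\<Sum>i\<in>UNIV. cnj (U$i$k) * d i * U$i$l) = 0" by (intro sum.neutral) (use z0 in auto)
    then show ?thesis using Req False ent by simp
  qed
  moreover have "diag_unitary_mat (mat 1 :: complex^'n^'n)"
  proof -
    have "(mat 1 :: complex^'n^'n) = (\<chi> i j. if i = j then (\<lambda>_. 1) i else 0)"
      by (simp add: mat_def)
    then show ?thesis using diag_unitary[of "\<lambda>_. 1::complex"] by simp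
  qed
  moreover have "diag_unitary_mat D2" unfolding D2_def using diag_unitary[OF dn] .
  ultimately show ?thesis by blast
qed

end
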